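(* Let $P\subseteq S_n$ be a permutation array with Hamming distance $d$, and let $m\in\{1,\ldots,n-1\}$. Suppose that for any $\sigma,\tau\in P$ the disjoint cycle decomposition of $\sigma^{-1}\tau$ has no cycle of odd length $\ell\in\{3,\ldots,2m+1\}$. Then (1) ${\rm hd}(P^{{\sf CT}^m})\ge d-2m$, and (2) if $d>2m$ then $|P^{{\sf CT}^m}|=|P|$.
   Context: $S_n$ is the symmetric group on $\{0,1,\ldots,n-1\}$, with composition from left to right: $\tau\sigma(x):=\sigma(\tau(x))$. A permutation array is a non-empty subset $P\subseteq S_n$; ${\rm hd}(\sigma,\tau)=|\{x:\sigma(x)\neq\tau(x)\}|$ and the Hamming distance of $P$ is ${\rm hd}(P)=\min\{{\rm hd}(\sigma,\tau):\sigma,\tau\in P,\ \sigma\neq\tau\}$. The contraction of $\sigma\in S_n$ is $\sigma^{\sf CT}\in S_{n-1}$ (on $\{0,\ldots,n-2\}$) defined by $\sigma^{\sf CT}(x)=\sigma(n-1)$ if $x=\sigma^{-1}(n-1)$ and $\sigma^{\sf CT}(x)=\sigma(x)$ otherwise (i.e. delete $n-1$ from the cycle notation). For $1\le m\le n-1$, $\sigma^{{\sf CT}^m}=(\sigma^{{\sf CT}^{m-1}})^{\sf CT}\in S_{n-m}$ with $\sigma^{{\sf CT}^1}=\sigma^{\sf CT}$, and $P^{{\sf CT}^m}=\{\sigma^{{\sf CT}^m}:\sigma\in P\}$. *)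

theory Defs
  imports "HOL-Combinatorics.Permutations"
begin

text \<open>Composition in the paper is left to right:
  (tau sigma)(x) = sigma(tau(x)), so the paper's sigma^{-1} tau is the
  Isabelle function  tau o inv sigma.\<close>

definition perm_array :: "nat \<Rightarrow> (nat \<Rightarrow> nat) set \<Rightarrow> bool" where
  "perm_array n P \<longleftrightarrow> P \<noteq> {} \<and> (\<forall>\<sigma>\<in>P. \<sigma> permutes {..<n})"

definition hd_perm :: "nat \<Rightarrow> (nat \<Rightarrow> nat) \<Rightarrow> (nat \<Rightarrow> nat) \<Rightarrow> nat" where
  "hd_perm n \<sigma> \<tau> = card {x \<in> {..<n}. \<sigma> x \<noteq> \<tau> x}"

definition hd_array :: "nat \<Rightarrow> (nat \<Rightarrow> nat) set \<Rightarrow> nat" where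
  "hd_array n P = Inf {hd_perm n \<sigma> \<tau> | \<sigma> \<tau>. \<sigma> \<in> P \<and> \<tau> \<in> P \<and> \<sigma> \<noteq> \<tau>}"

text \<open>Contraction of sigma in S_n to S_{n-1}: delete n-1 from the cycle notation.\<close>
definition contract :: "nat \<Rightarrow> (nat \<Rightarrow> nat) \<Rightarrow> (nat \<Rightarrow> nat)" where
  "contract n \<sigma> = (\<lambda>x. if x < n - 1 then (if \<sigma> x = n - 1 then \<sigma> (n - 1) else \<sigma> x) else x)"

fun contract_iter :: "nat \<Rightarrow> nat \<Rightarrow> (nat \<Rightarrow> nat) \<Rightarrow> (nat \<Rightarrow> nat)" where
  "contract_iter 0 n \<sigma> = \<sigma>"
| "contract_iter (Suc m) n \<sigma> = contract (n - m) (contract_iter m n \<sigma>)"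

definition contract_array :: "nat \<Rightarrow> nat \<Rightarrow> (nat \<Rightarrow> nat) set \<Rightarrow> (nat \<Rightarrow> nat) set" where
  "contract_array m n P = contract_iter m n ` P"

definition cycle_length :: "(nat \<Rightarrow> nat) \<Rightarrow> nat \<Rightarrow> nat" where
  "cycle_length \<pi> x = card {(\<pi> ^^ k) x | k. True}"

definition has_cycle_of_length :: "nat \<Rightarrow> (nat \<Rightarrow> nat) \<Rightarrow> nat \<Rightarrow> bool" where
  "has_cycle_of_length n \<pi> l \<longleftrightarrow> (\<exists>x<n. cycle_length \<pi> x = l)"

end

theory Submission
  imports Defs "HOL-Combinatorics.Orbits"
begin

lemma follow:
  assumes "\<And>z. z \<notin> X \<Longrightarrow> g z = f z" "\<And>i. i < j \<Longrightarrow> (f^^i) x \<notin> X"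
  shows "(g^^j) x = (f^^j) x"
  using assms(2) by (induction j) (auto simp: assms(1))

lemma orbit_same:
  assumes "permutation g" "z \<in> orbit g x" shows "orbit g z = orbit g x"
  using assms cyclic_on_orbit' orbit_cyclic_eq3 by metis

lemma orbit_disj:
  assumes "permutation f" "orbit f x \<noteq> orbit f u" shows "u \<notin> orbit f x"
  using assms orbit_same by metis

lemma in_orbitI: "0 < i \<Longrightarrow> (f^^i) x \<in> orbit f x"
  by (auto simp: orbit_altdef)

lemma orbit_merge:
  assumes perm: "permutation f" and uv: "u \<noteq> v" and nv: "v \<notin> orbit f u"
    and g: "g = f \<circ> transpose u v"
  shows "orbit g u = orbit f u \<union> orbit f v"
proof -
  have selfv: "v \<in> orbit f v" and selfu: "u \<in> orbit f u"
    using permutation_self_in_orbit[OF perm] by auto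
  have nu: "u \<notin> orbit f v" using orbit_swap[OF selfv] nv by blast
  define p where "p = funpow_dist1 f v v"
  define q where "q = funpow_dist1 f u u"
  have fp: "(f^^p) v = v" unfolding p_def using funpow_dist1_prop[OF selfv] .
  have fq: "(f^^q) u = u" unfolding q_def using funpow_dist1_prop[OF selfu] .
  have p0: "0 < p" "0 < q" unfolding p_def q_def by auto
  have gz: "\<And>z. z \<notin> {u,v} \<Longrightarrow> g z = f z" using g by auto
  have A: "(g^^i) u = (f^^i) v" if "0 < i" "i \<le> p" for i
  proof -
    obtain i' where i': "i = Suc i'" using \<open>0 < i\<close> by (cases i) auto
    have "(g^^i') (f v) = (f^^i') (f v)"
    proof (rule follow[OF gz])
      fix j assume "j < i'"
      have "(f^^j) (f v) = (f^^(Suc j)) v" by (simp add: funpow_swap1)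
      moreover have "(f^^(Suc j)) v \<noteq> v" using funpow_dist1_least[of "Suc j" f v v] \<open>j < i'\<close> i' that
        unfolding p_def by auto
      moreover have "(f^^(Suc j)) v \<noteq> u" using nu in_orbitI[of "Suc j" f v] by auto
      ultimately show "(f^^j) (f v) \<notin> {u,v}" by auto
    qed
    then show ?thesis using g i' by (simp add: funpow_swap1)
  qed
  have gp: "(g^^p) u = v" using A[of p] p0 fp by auto
  have B: "(g^^(p+i)) u = (f^^i) u" if "0 < i" "i \<le> q" for i
  proof -
    obtain i' where i': "i = Suc i'" using \<open>0 < i\<close> by (cases i) auto
    have "(g^^i') (f u) = (f^^i') (f u)"
    proof (rule follow[OF gz])
      fix j assume "j < i'"
      have "(f^^j) (f u) = (f^^(Suc j)) u" by (simp add: funpow_swap1)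
      moreover have "(f^^(Suc j)) u \<noteq> u" using funpow_dist1_least[of "Suc j" f u u] \<open>j < i'\<close> i' that
        unfolding q_def by auto
      moreover have "(f^^(Suc j)) u \<noteq> v" using nv in_orbitI[of "Suc j" f u] by auto
      ultimately show "(f^^j) (f u) \<notin> {u,v}" by auto
    qed
    then have "(g^^i) v = (f^^i) u" using g i' by (simp add: funpow_swap1)
    moreover have "(g^^(p+i)) u = (g^^i) ((g^^p) u)" by (simp add: funpow_add add.commute[of p i])
    ultimately show ?thesis using gp by simp
  qed
  have gpq: "(g^^(p+q)) u = u" using B[of q] p0 fq by auto
  have og: "orbit g u = {(g^^m) u| m. m < p+q}"
    using orbit_altdef_bounded[OF gpq] p0 by simp
  have ofu: "orbit f u = {(f^^m) u| m. m < q}" using orbit_altdef_bounded[OF fq] p0 by simp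
  have ofv: "orbit f v = {(f^^m) v| m. m < p}" using orbit_altdef_bounded[OF fp] p0 by simp
  show ?thesis
  proof (intro set_eqI iffI)
    fix z assume "z \<in> orbit g u"
    then obtain m where m: "m < p+q" "z = (g^^m) u" using og by auto
    show "z \<in> orbit f u \<union> orbit f v"
    proof (cases "m = 0")
      case True then show ?thesis using m selfu by auto
    next
      case False
      show ?thesis
      proof (cases "m \<le> p")
        case True then show ?thesis using A[of m] False m in_orbitI[of m f v] by auto
      next
        case F2: False
        then have "z = (f^^(m-p)) u" using B[of "m-p"] m by auto
        then show ?thesis using in_orbitI[of "m-p" f u] F2 by auto
      qed
    qed
  next
    fix z assume "z \<in> orbit f u \<union> orbit f v"
    then show "z \<in> orbit g u"
    proof
      assume "z \<in> orbit f u"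
      then obtain m where m: "m < q" "z = (f^^m) u" using ofu by auto
      show ?thesis
      proof (cases "m = 0")
        case True then show ?thesis using gpq m in_orbitI[of "p+q" g u] p0 by auto
      next
        case False then show ?thesis using B[of m] m in_orbitI[of "p+m" g u] by auto
      qed
    next
      assume "z \<in> orbit f v"
      then obtain m where m: "m < p" "z = (f^^m) v" using ofv by auto
      show ?thesis
      proof (cases "m = 0")
        case True then show ?thesis using gp m in_orbitI[of "p" g u] p0 by auto
      next
        case False then show ?thesis using A[of m] m in_orbitI[of "m" g u] by auto
      qed
    qed
  qed
qed

lemma orbit_split_aux:
  assumes perm: "permutation f" and uv: "u \<noteq> v" and v: "v \<in> orbit f u"
    and g: "g = f \<circ> transpose u v"
  shows "u \<notin> orbit g v"
proof -
  define d where "d = funpow_dist1 f u v"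
  have fd: "(f^^d) u = v" unfolding d_def using funpow_dist1_prop[OF v] .
  have d0: "0 < d" unfolding d_def by auto
  have gz: "\<And>z. z \<notin> {u,v} \<Longrightarrow> g z = f z" using g by auto
  have nv: "(f^^i) u \<noteq> v" if "0 < i" "i < d" for i
    using funpow_dist1_least[of i f u v] that unfolding d_def by auto
  have nu: "(f^^i) u \<noteq> u" if "0 < i" "i < d" for i
  proof
    assume eq: "(f^^i) u = u"
    have "(f^^(d-i)) u = (f^^(d-i)) ((f^^i) u)" using eq by simp
    also have "\<dots> = (f^^(d-i+i)) u" by (simp add: funpow_add)
    also have "\<dots> = v" using fd that by simp
    finally have "(f^^(d-i)) u = v" .
    then show False using nv[of "d-i"] that by auto
  qed
  have A: "(g^^i) v = (f^^i) u" if "0 < i" "i \<le> d" for i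
  proof -
    obtain i' where i': "i = Suc i'" using \<open>0 < i\<close> by (cases i) auto
    have "(g^^i') (f u) = (f^^i') (f u)"
    proof (rule follow[OF gz])
      fix j assume "j < i'"
      have "(f^^j) (f u) = (f^^(Suc j)) u" by (simp add: funpow_swap1)
      then show "(f^^j) (f u) \<notin> {u,v}" using nu[of "Suc j"] nv[of "Suc j"] \<open>j < i'\<close> i' that by auto
    qed
    then show ?thesis using g i' by (simp add: funpow_swap1)
  qed
  have gd: "(g^^d) v = v" using A[of d] d0 fd by auto
  have og: "orbit g v = {(g^^m) v| m. m < d}"
    using orbit_altdef_bounded[OF gd] d0 by simp
  show ?thesis
  proof
    assume "u \<in> orbit g v"
    then obtain m where m: "m < d" "u = (g^^m) v" using og by auto
    show False
    proof (cases "m = 0")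
      case True then show False using m uv by auto
    next
      case False then show False using A[of m] m nu[of m] by auto
    qed
  qed
qed

lemma orbit_split:
  assumes perm: "permutation f" and uv: "u \<noteq> v" and v: "v \<in> orbit f u"
    and g: "g = f \<circ> transpose u v"
  shows "orbit f u = orbit g u \<union> orbit g v" "orbit g u \<inter> orbit g v = {}"
proof -
  have pg: "permutation g" using g perm by (simp add: permutation_compose permutation_swap_id)
  have nu: "u \<notin> orbit g v" using orbit_split_aux[OF assms] .
  have selfu: "u \<in> orbit g u" using permutation_self_in_orbit[OF pg] by auto
  have nv: "v \<notin> orbit g u" using orbit_swap[OF selfu] nu by blast
  have f: "f = g \<circ> transpose u v" using g by (simp add: comp_assoc)
  show "orbit f u = orbit g u \<union> orbit g v" using orbit_merge[OF pg uv nv f] .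
  show "orbit g u \<inter> orbit g v = {}"
  proof (rule ccontr)
    assume "orbit g u \<inter> orbit g v \<noteq> {}"
    then obtain z where "z \<in> orbit g u" "z \<in> orbit g v" by auto
    then have "orbit g u = orbit g v" using orbit_same[OF pg] by metis
    then show False using selfu nu by auto
  qed
qed

lemma orbit_unchanged:
  assumes perm: "permutation f" and g: "g = f \<circ> transpose u v"
    and "u \<notin> orbit f x" "v \<notin> orbit f x"
  shows "orbit g x = orbit f x"
proof (rule orbit_cong)
  show "x \<in> orbit f x" using permutation_self_in_orbit[OF perm] .
  fix s assume "s \<in> orbit f x"
  then have "s \<noteq> u" "s \<noteq> v" using assms by auto
  then show "g s = f s" using g by simp
qed

definition wc :: "nat set \<Rightarrow> nat set \<Rightarrow> bool" where
  "wc B Z \<longleftrightarrow> odd (card Z) \<and> card Z \<le> 2 * card (Z \<inter> B) + 1"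

definition Wt :: "(nat \<Rightarrow> nat) \<Rightarrow> nat set \<Rightarrow> nat set \<Rightarrow> nat" where
  "Wt f S B = (\<Sum>Z\<in>orbit f ` S. of_bool (wc B Z))"

lemma W_split:
  assumes fS: "f permutes S" and fin: "finite S" and uS: "u \<in> S" and vS: "v \<in> S"
    and uv: "u \<noteq> v" and v: "v \<in> orbit f u" and g: "g = f \<circ> transpose u v"
  shows "Wt g S B + of_bool (wc B (orbit f u))
       = Wt f S B + of_bool (wc B (orbit g u)) + of_bool (wc B (orbit g v))"
proof -
  have perm: "permutation f" using fS fin permutation_permutes by blast
  have pg: "permutation g" using g perm by (simp add: permutation_compose permutation_swap_id)
  note sp = orbit_split[OF perm uv v g]
  define R where "R = orbit f ` S - {orbit f u}"
  have finR: "finite R" unfolding R_def using fin by auto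
  have F: "orbit f ` S = insert (orbit f u) R" unfolding R_def using uS by auto
  have selfgu: "u \<in> orbit g u" and selfgv: "v \<in> orbit g v"
    using permutation_self_in_orbit[OF pg] by auto
  have other: "orbit g x = orbit f x" if "x \<in> S" "orbit f x \<noteq> orbit f u" for x
  proof -
    have "u \<notin> orbit f x" using orbit_disj[OF perm that(2)] .
    moreover have "v \<notin> orbit f x"
      using orbit_disj[OF perm, of x v] that(2) orbit_same[OF perm v] by auto
    ultimately show ?thesis using orbit_unchanged[OF perm g] by auto
  qed
  have G: "orbit g ` S = insert (orbit g u) (insert (orbit g v) R)"
  proof (intro set_eqI iffI)
    fix Z assume "Z \<in> orbit g ` S"
    then obtain x where x: "x \<in> S" "Z = orbit g x" by auto
    show "Z \<in> insert (orbit g u) (insert (orbit g v) R)"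
    proof (cases "x \<in> orbit f u")
      case True
      then have "x \<in> orbit g u \<or> x \<in> orbit g v" using sp(1) by auto
      then show ?thesis using x orbit_same[OF pg] by auto
    next
      case False
      then have "orbit f x \<noteq> orbit f u" using permutation_self_in_orbit[OF perm, of x] by auto
      then show ?thesis using other[OF x(1)] x unfolding R_def by auto
    qed
  next
    fix Z assume "Z \<in> insert (orbit g u) (insert (orbit g v) R)"
    then show "Z \<in> orbit g ` S"
    proof (elim insertE)
      assume "Z \<in> R"
      then obtain x where "x \<in> S" "Z = orbit f x" "orbit f x \<noteq> orbit f u" unfolding R_def by auto
      then show ?thesis using other by force
    qed (use uS vS in auto)
  qed
  have notR: "orbit g u \<notin> R" "orbit g v \<notin> R"
  proof -
    have "Q \<notin> R" if "w \<in> Q" "Q \<subseteq> orbit f u" for Q w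
    proof
      assume "Q \<in> R"
      then obtain x where "Q = orbit f x" "orbit f x \<noteq> orbit f u" unfolding R_def by auto
      then show False using orbit_disj[OF perm, of x w] that orbit_same[OF perm, of w u] by auto
    qed
    then show "orbit g u \<notin> R" "orbit g v \<notin> R" using selfgu selfgv sp(1) by auto
  qed
  have neq: "orbit g u \<noteq> orbit g v" using sp(2) selfgu by auto
  have "orbit f u \<notin> R" unfolding R_def by auto
  then show ?thesis unfolding Wt_def F G using finR notR neq by (simp add: sum.insert)
qed

lemma W_merge:
  assumes fS: "f permutes S" and fin: "finite S" and uS: "u \<in> S" and vS: "v \<in> S"
    and uv: "u \<noteq> v" and v: "v \<notin> orbit f u" and g: "g = f \<circ> transpose u v"
  shows "Wt g S B + of_bool (wc B (orbit f u)) + of_bool (wc B (orbit f v))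
       = Wt f S B + of_bool (wc B (orbit f u \<union> orbit f v))"
    and "orbit g u = orbit f u \<union> orbit f v"
proof -
  have perm: "permutation f" using fS fin permutation_permutes by blast
  have pg: "permutation g" using g perm by (simp add: permutation_compose permutation_swap_id)
  note mg = orbit_merge[OF perm uv v g]
  show "orbit g u = orbit f u \<union> orbit f v" using mg .
  define R where "R = orbit f ` S - {orbit f u, orbit f v}"
  have finR: "finite R" unfolding R_def using fin by auto
  have selfu: "u \<in> orbit f u" and selfv: "v \<in> orbit f v"
    using permutation_self_in_orbit[OF perm] by auto
  have neq: "orbit f u \<noteq> orbit f v" using selfv v by auto
  have F: "orbit f ` S = insert (orbit f u) (insert (orbit f v) R)" unfolding R_def using uS vS by auto
  have other: "orbit g x = orbit f x" if "x \<in> S" "orbit f x \<noteq> orbit f u" "orbit f x \<noteq> orbit f v" for x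
    using orbit_disj[OF perm that(2)] orbit_disj[OF perm that(3)] orbit_unchanged[OF perm g] by auto
  have G: "orbit g ` S = insert (orbit f u \<union> orbit f v) R"
  proof (intro set_eqI iffI)
    fix Z assume "Z \<in> orbit g ` S"
    then obtain x where x: "x \<in> S" "Z = orbit g x" by auto
    show "Z \<in> insert (orbit f u \<union> orbit f v) R"
    proof (cases "x \<in> orbit f u \<union> orbit f v")
      case True
      then show ?thesis using x orbit_same[OF pg, of x u] mg by auto
    next
      case False
      then have "orbit f x \<noteq> orbit f u" "orbit f x \<noteq> orbit f v"
        using permutation_self_in_orbit[OF perm, of x] by auto
      then show ?thesis using other[OF x(1)] x unfolding R_def by auto
    qed
  next
    fix Z assume "Z \<in> insert (orbit f u \<union> orbit f v) R"
    then show "Z \<in> orbit g ` S"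
    proof (elim insertE)
      assume "Z \<in> R"
      then obtain x where "x \<in> S" "Z = orbit f x" "orbit f x \<noteq> orbit f u" "orbit f x \<noteq> orbit f v"
        unfolding R_def by auto
      then show ?thesis using other by force
    qed (use uS mg in auto)
  qed
  have notR: "orbit f u \<union> orbit f v \<notin> R"
  proof
    assume "orbit f u \<union> orbit f v \<in> R"
    then obtain x where "orbit f u \<union> orbit f v = orbit f x" "orbit f x \<noteq> orbit f u" unfolding R_def by auto
    then show False using orbit_disj[OF perm, of x u] selfu by auto
  qed
  have "orbit f u \<notin> insert (orbit f v) R" "orbit f v \<notin> R" unfolding R_def using neq by auto
  then show "Wt g S B + of_bool (wc B (orbit f u)) + of_bool (wc B (orbit f v))
       = Wt f S B + of_bool (wc B (orbit f u \<union> orbit f v))"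
    unfolding Wt_def F G using finR notR by (simp add: sum.insert)
qed

lemma wc_single: "y \<in> B \<Longrightarrow> wc B {y}"
  unfolding wc_def by auto

lemma wc_empty: "\<not> wc B {}"
  unfolding wc_def by auto

lemma wc_combine:
  assumes fin: "finite C" and C: "C = Y \<union> Q" and disj: "Y \<inter> Q = {}" and y: "y \<in> Y" "y \<in> B"
    and wq: "wc B Q" and wz: "wc B (Y - {y})"
  shows "wc B C"
proof -
  have fY: "finite Y" "finite Q" using fin C by auto
  have c1: "card C = card Y + card Q" using C disj fY card_Un_disjoint by blast
  have c2: "card Y = card (Y - {y}) + 1" using y fY card_Suc_Diff1 by fastforce
  have c3: "card (C \<inter> B) = card (Y \<inter> B) + card (Q \<inter> B)"
  proof -
    have "C \<inter> B = (Y \<inter> B) \<union> (Q \<inter> B)" using C by auto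
    moreover have "(Y \<inter> B) \<inter> (Q \<inter> B) = {}" using disj by auto
    ultimately show ?thesis using fY card_Un_disjoint[of "Y \<inter> B" "Q \<inter> B"] by simp
  qed
  have c4: "card (Y \<inter> B) = card ((Y - {y}) \<inter> B) + 1"
  proof -
    have "Y \<inter> B = insert y ((Y - {y}) \<inter> B)" using y by auto
    then show ?thesis using fY by simp
  qed
  have o: "odd (card Q)" "odd (card (Y - {y}))" "card Q \<le> 2 * card (Q \<inter> B) + 1"
     "card (Y - {y}) \<le> 2 * card ((Y - {y}) \<inter> B) + 1" using wq wz unfolding wc_def by auto
  have "odd (card C)" using o(1,2) c1 c2 by simp
  moreover have "card C \<le> 2 * card (C \<inter> B) + 1" using o(3,4) c1 c2 c3 c4 by linarith
  ultimately show ?thesis unfolding wc_def by simp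
qed

lemma W_stepB:
  assumes g1S: "g1 permutes S" and fin: "finite S" and yS: "y \<in> S" and yB: "y \<in> B"
    and g2: "g2 = g1 \<circ> transpose y (inv g1 y)"
  shows "Wt g2 S B + of_bool (wc B (orbit g1 y)) = Wt g1 S B + 1 + of_bool (wc B (orbit g1 y - {y}))"
    and "g2 y = y"
proof -
  define c where "c = inv g1 y"
  have gc: "g1 c = y" unfolding c_def using permutes_inverses[OF g1S] by simp
  have cS: "c \<in> S" using permutes_in_image[OF g1S, of c] gc yS by simp
  have perm: "permutation g1" using g1S fin permutation_permutes by blast
  show "g2 y = y" using g2 gc unfolding c_def by simp
  show "Wt g2 S B + of_bool (wc B (orbit g1 y)) = Wt g1 S B + 1 + of_bool (wc B (orbit g1 y - {y}))"
  proof (cases "c = y")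
    case True
    then have "g2 = g1" using g2 unfolding c_def by simp
    moreover have "orbit g1 y = {y}" using True gc orbit_eq_singleton_iff by metis
    ultimately show ?thesis using wc_single[OF yB] wc_empty by simp
  next
    case False
    have "y \<in> orbit g1 c" using gc orbit.base[of g1 c] by simp
    then have cy: "c \<in> orbit g1 y" using orbit_swap[OF permutation_self_in_orbit[OF perm]] by blast
    have g2': "g2 = g1 \<circ> transpose y c" using g2 c_def by simp
    note ws = W_split[OF g1S fin yS cS False[symmetric] cy g2', of B]
    note sp = orbit_split[OF perm False[symmetric] cy g2']
    have g2y: "g2 y = y" using g2' gc by simp
    have oy: "orbit g2 y = {y}" using g2y orbit_eq_singleton_iff by metis
    have oc: "orbit g2 c = orbit g1 y - {y}" using sp oy by auto
    show ?thesis using ws oy oc wc_single[OF yB] by simp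
  qed
qed

lemma W_stepC:
  assumes gS: "g permutes S" and fin: "finite S" and yS: "y \<in> S" and gy: "g y = y"
  and yB: "y \<in> B"
  shows "Wt g (S - {y}) (B - {y}) + 1 = Wt g S B"
proof -
  have perm: "permutation g" using gS fin permutation_permutes by blast
  have oy: "orbit g y = {y}" using gy orbit_eq_singleton_iff by metis
  have ny: "y \<notin> orbit g x" if "x \<in> S - {y}" for x
  proof
    assume "y \<in> orbit g x"
    then have "orbit g y = orbit g x" using orbit_same[OF perm] by blast
    then show False using oy that permutation_self_in_orbit[OF perm, of x] by auto
  qed
  have I: "orbit g ` S = insert {y} (orbit g ` (S - {y}))" using yS oy by auto
  have N: "{y} \<notin> orbit g ` (S - {y})" using ny by auto
  have "Wt g S B = 1 + (\<Sum>Z\<in>orbit g ` (S - {y}). of_bool (wc B Z))"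
    unfolding Wt_def I using N fin wc_single[OF yB] by (simp add: sum.insert)
  also have "(\<Sum>Z\<in>orbit g ` (S - {y}). of_bool (wc B Z)) = Wt g (S - {y}) (B - {y})"
    unfolding Wt_def
  proof (rule sum.cong)
    fix Z assume "Z \<in> orbit g ` (S - {y})"
    then have "y \<notin> Z" using ny by auto
    then have "Z \<inter> (B - {y}) = Z \<inter> B" by auto
    then show "of_bool (wc B Z) = of_bool (wc (B - {y}) Z)" unfolding wc_def by simp
  qed simp
  finally show ?thesis by simp
qed

lemma contract_eq:
  assumes s: "\<sigma> permutes {..<k}" and k: "0 < k"
  shows "contract k \<sigma> = transpose (k-1) (\<sigma> (k-1)) \<circ> \<sigma>"
proof
  fix x
  have inj: "\<And>a b. \<sigma> a = \<sigma> b \<Longrightarrow> a = b" using permutes_inj[OF s] by (simp add: inj_eq)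
  have lt: "\<sigma> (k-1) < k" using permutes_in_image[OF s, of "k-1"] k by simp
  show "contract k \<sigma> x = (transpose (k-1) (\<sigma> (k-1)) \<circ> \<sigma>) x"
  proof (cases "x < k - 1")
    case True
    then have ne: "\<sigma> x \<noteq> \<sigma> (k-1)" using inj by force
    show ?thesis
    proof (cases "\<sigma> x = k - 1")
      case True then show ?thesis using \<open>x < k - 1\<close> unfolding contract_def by simp
    next
      case False then show ?thesis using \<open>x < k - 1\<close> ne unfolding contract_def
        by (simp add: transpose_apply_other)
    qed
  next
    case False
    show ?thesis
    proof (cases "x = k - 1")
      case True then show ?thesis unfolding contract_def by simp
    next
      case F2: False
      then have "x \<notin> {..<k}" using False by auto
      then have sx: "\<sigma> x = x" using permutes_not_in[OF s] by blast
      have "x \<noteq> \<sigma> (k-1)" using lt \<open>x \<notin> {..<k}\<close> by auto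
      then show ?thesis using False F2 sx unfolding contract_def by (simp add: transpose_apply_other)
    qed
  qed
qed

lemma contract_permutes:
  assumes s: "\<sigma> permutes {..<k}" and k: "0 < k"
  shows "contract k \<sigma> permutes {..<k-1}"
proof -
  have a: "\<sigma> (k-1) \<in> {..<k}" using permutes_in_image[OF s, of "k-1"] k by simp
  have k1: "k - 1 \<in> {..<k}" using k by simp
  have p: "transpose (k-1) (\<sigma> (k-1)) \<circ> \<sigma> permutes {..<k}"
    using permutes_compose[OF s permutes_swap_id[OF k1 a]] .
  have "(transpose (k-1) (\<sigma> (k-1)) \<circ> \<sigma>) x = x" if "x \<in> {..<k} - {..<k-1}" for x
  proof -
    have "x = k - 1" using that by auto
    then show ?thesis by simp
  qed
  then show ?thesis unfolding contract_eq[OF s k] using permutes_superset[OF p] by blast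
qed

lemma step_W:
  assumes s: "\<sigma> permutes {..<k}" and t: "\<tau> permutes {..<k}" and k: "0 < k" and yB: "k - 1 \<in> B"
  shows "Wt (contract k \<tau> \<circ> inv (contract k \<sigma>)) {..<k-1} (B - {k-1}) \<le> Wt (\<tau> \<circ> inv \<sigma>) {..<k} B + 1"
proof -
  define y where "y = k - 1"
  define S where "S = {..<k}"
  define a where "a = \<sigma> y"
  define b where "b = \<tau> y"
  define \<pi> where "\<pi> = \<tau> \<circ> inv \<sigma>"
  define g1 where "g1 = \<pi> \<circ> transpose y a"
  define c where "c = inv g1 y"
  define g2 where "g2 = g1 \<circ> transpose y c"
  have fin: "finite S" unfolding S_def by simp
  have yS: "y \<in> S" unfolding S_def y_def using k by simp
  have aS: "a \<in> S" unfolding a_def S_def using permutes_in_image[OF s] yS S_def by simp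
  have piS: "\<pi> permutes S" unfolding \<pi>_def S_def using permutes_compose[OF permutes_inv[OF s] t] .
  have g1S: "g1 permutes S" unfolding g1_def using permutes_compose[OF permutes_swap_id[OF yS aS] piS] .
  have g2S: "g2 permutes S" unfolding g2_def c_def
    using permutes_compose[OF permutes_swap_id[OF yS] g1S] permutes_in_image[OF permutes_inv[OF g1S]] yS
    by simp
  have g1y: "g1 y = b" unfolding g1_def \<pi>_def b_def a_def using permutes_inverses[OF s] by simp
  have gc: "g1 c = y" unfolding c_def using permutes_inverses[OF g1S] by simp
  have g1inj: "\<And>p q. g1 p = g1 q \<Longrightarrow> p = q" using permutes_inj[OF g1S] by (simp add: inj_eq)
  have eq: "contract k \<tau> \<circ> inv (contract k \<sigma>) = g2"
  proof -
    have bs: "bij \<sigma>" using permutes_bij[OF s] .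
    have "inv (contract k \<sigma>) = inv \<sigma> \<circ> transpose y a"
      unfolding contract_eq[OF s k] y_def[symmetric] a_def[symmetric]
      by (simp add: o_inv_distrib bs)
    then have L: "contract k \<tau> \<circ> inv (contract k \<sigma>) = transpose y b \<circ> g1"
      unfolding contract_eq[OF t k] y_def[symmetric] b_def[symmetric] g1_def \<pi>_def
      by (simp add: comp_assoc)
    show ?thesis unfolding L
    proof
      fix x
      show "(transpose y b \<circ> g1) x = g2 x"
      proof (cases "x = y")
        case True then show ?thesis unfolding g2_def using g1y gc by simp
      next
        case F1: False
        show ?thesis
        proof (cases "x = c")
          case True then show ?thesis unfolding g2_def using g1y gc by simp
        next
          case False
          have "g1 x \<noteq> y" using gc g1inj False by metis
          moreover have "g1 x \<noteq> b" using g1y g1inj F1 by metis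
          ultimately show ?thesis unfolding g2_def using F1 False by (simp add: transpose_apply_other)
        qed
      qed
    qed
  qed
  have yB': "y \<in> B" using yB y_def by simp
  note sB = W_stepB[OF g1S fin yS yB' g2_def[unfolded c_def], folded c_def g2_def]
  note sC = W_stepC[OF g2S fin yS sB(2) yB']
  have S1: "{..<k-1} = S - {y}" unfolding S_def y_def using k by auto
  have main: "Wt g2 S B \<le> Wt \<pi> S B + 2"
  proof (cases "a = y")
    case True
    then have "g1 = \<pi>" unfolding g1_def by simp
    then show ?thesis using sB(1)
      by (cases "wc B (orbit \<pi> y)"; cases "wc B (orbit \<pi> y - {y})"; simp)
  next
    case ay: False
    have perm: "permutation \<pi>" using piS fin permutation_permutes by blast
    show ?thesis
    proof (cases "a \<in> orbit \<pi> y")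
      case True
      note ws = W_split[OF piS fin yS aS ay[symmetric] True g1_def, of B]
      note sp = orbit_split[OF perm ay[symmetric] True g1_def]
      have finC: "finite (orbit \<pi> y)" using permutes_orbit_subset[OF piS yS] fin finite_subset by blast
      have "y \<in> orbit g1 y"
        using permutation_self_in_orbit[of g1] g1S fin permutation_permutes by blast
      then have imp: "wc B (orbit g1 a) \<Longrightarrow> wc B (orbit g1 y - {y}) \<Longrightarrow> wc B (orbit \<pi> y)"
        using wc_combine[OF finC sp(1) sp(2) _ yB'] by blast
      show ?thesis using ws sB(1) imp
        by (cases "wc B (orbit g1 a)"; cases "wc B (orbit g1 y - {y})"; cases "wc B (orbit \<pi> y)";
            cases "wc B (orbit g1 y)"; simp)
    next
      case False
      note wm = W_merge(1)[OF piS fin yS aS ay[symmetric] False g1_def, of B]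
        W_merge(2)[OF piS fin yS aS ay[symmetric] False g1_def]
      show ?thesis using wm sB(1)
        by (cases "wc B (orbit g1 y - {y})"; cases "wc B (orbit \<pi> y)"; cases "wc B (orbit \<pi> a)";
            cases "wc B (orbit g1 y)"; simp)
    qed
  qed
  show ?thesis unfolding eq S1 using main sC y_def S_def \<pi>_def by simp
qed

lemma Wt_card: "finite S \<Longrightarrow> Wt f S B = card {Z \<in> orbit f ` S. wc B Z}"
  unfolding Wt_def by (simp add: sum_of_bool_eq Int_def)

lemma hd_agree: "hd_perm k \<sigma> \<tau> + card {x\<in>{..<k}. \<sigma> x = \<tau> x} = k"
proof -
  have "{x\<in>{..<k}. \<sigma> x \<noteq> \<tau> x} \<union> {x\<in>{..<k}. \<sigma> x = \<tau> x} = {..<k}" by auto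
  moreover have "{x\<in>{..<k}. \<sigma> x \<noteq> \<tau> x} \<inter> {x\<in>{..<k}. \<sigma> x = \<tau> x} = {}" by auto
  ultimately show ?thesis unfolding hd_perm_def
    using card_Un_disjoint[of "{x\<in>{..<k}. \<sigma> x \<noteq> \<tau> x}" "{x\<in>{..<k}. \<sigma> x = \<tau> x}"] by simp
qed

lemma W_lower:
  assumes s: "\<sigma> permutes {..<k}" and t: "\<tau> permutes {..<k}"
  shows "card {x\<in>{..<k}. \<sigma> x = \<tau> x} \<le> Wt (\<tau> \<circ> inv \<sigma>) {..<k} {}"
proof -
  define \<pi> where "\<pi> = \<tau> \<circ> inv \<sigma>"
  define A where "A = {x\<in>{..<k}. \<sigma> x = \<tau> x}"
  have sinj: "\<And>a b. \<sigma> a = \<sigma> b \<Longrightarrow> a = b" using permutes_inj[OF s] by (simp add: inj_eq)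
  have inj: "inj_on (\<lambda>x. {\<sigma> x}) A"
  proof (rule inj_onI)
    fix a b assume "{\<sigma> a} = {\<sigma> b}"
    then show "a = b" using sinj by blast
  qed
  have sub: "(\<lambda>x. {\<sigma> x}) ` A \<subseteq> {Z \<in> orbit \<pi> ` {..<k}. wc {} Z}"
  proof
    fix Z assume "Z \<in> (\<lambda>x. {\<sigma> x}) ` A"
    then obtain x where x: "x < k" "\<sigma> x = \<tau> x" "Z = {\<sigma> x}" unfolding A_def by blast
    have "\<pi> (\<sigma> x) = \<sigma> x" unfolding \<pi>_def using x(2) permutes_inverses(2)[OF s, of x] by simp
    then have o: "orbit \<pi> (\<sigma> x) = Z" using x(3) orbit_eq_singleton_iff by metis
    have lt: "\<sigma> x \<in> {..<k}" using permutes_in_image[OF s, of x] x(1) by simp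
    have w: "wc {} Z" using x(3) unfolding wc_def by simp
    have "Z \<in> orbit \<pi> ` {..<k}" using o lt by (metis image_eqI)
    then show "Z \<in> {Z \<in> orbit \<pi> ` {..<k}. wc {} Z}" using w by blast
  qed
  have "card A = card ((\<lambda>x. {\<sigma> x}) ` A)"
    using card_image[OF inj] by simp
  also have "\<dots> \<le> card {Z \<in> orbit \<pi> ` {..<k}. wc {} Z}"
    by (rule card_mono[OF _ sub]) simp
  also have "\<dots> = Wt \<pi> {..<k} {}" using Wt_card[of "{..<k}" \<pi> "{}"] by simp
  finally show ?thesis unfolding \<pi>_def A_def .
qed

lemma W_upper:
  assumes s: "\<sigma> permutes {..<n}" and t: "\<tau> permutes {..<n}" and mn: "m \<le> n"
    and hyp: "\<forall>l. odd l \<and> 3 \<le> l \<and> l \<le> 2 * m + 1 \<longrightarrow> \<not> has_cycle_of_length n (\<tau> \<circ> inv \<sigma>) l"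
  shows "Wt (\<tau> \<circ> inv \<sigma>) {..<n} {n-m..<n} \<le> card {x\<in>{..<n}. \<sigma> x = \<tau> x}"
proof -
  define \<pi> where "\<pi> = \<tau> \<circ> inv \<sigma>"
  define B where "B = {n-m..<n}"
  have cB: "card B = m" unfolding B_def using mn by simp
  have piS: "\<pi> permutes {..<n}" unfolding \<pi>_def using permutes_compose[OF permutes_inv[OF s] t] .
  have perm: "permutation \<pi>" using piS permutation_permutes by blast
  have sub: "{Z \<in> orbit \<pi> ` {..<n}. wc B Z} \<subseteq> (\<lambda>v. {v}) ` {v\<in>{..<n}. \<pi> v = v}"
  proof
    fix Z assume "Z \<in> {Z \<in> orbit \<pi> ` {..<n}. wc B Z}"
    then obtain x where x: "x < n" "Z = orbit \<pi> x" "wc B Z" by auto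
    have cl: "cycle_length \<pi> x = card Z"
      unfolding cycle_length_def x(2) orbit_altdef_permutation[OF perm] by simp
    have "card (Z \<inter> B) \<le> card B" by (rule card_mono) (auto simp: B_def)
    then have le: "card Z \<le> 2 * m + 1" "odd (card Z)" using x(3) cB unfolding wc_def by auto
    have "\<not> has_cycle_of_length n \<pi> (card Z) \<or> card Z < 3" using hyp le unfolding \<pi>_def by auto
    moreover have "has_cycle_of_length n \<pi> (card Z)" unfolding has_cycle_of_length_def using x(1) cl by blast
    ultimately have "card Z < 3" by blast
    then have c1: "card Z = 1" using le(2) by presburger
    have xZ: "x \<in> Z" using x(2) permutation_self_in_orbit[OF perm] by simp
    have Zx: "Z = {x}" using c1 xZ card_1_singletonE by (metis singletonD)
    then have "\<pi> x = x" using x(2) orbit_eq_singleton_iff by metis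
    then show "Z \<in> (\<lambda>v. {v}) ` {v\<in>{..<n}. \<pi> v = v}" using Zx x(1) by auto
  qed
  have sub2: "{v\<in>{..<n}. \<pi> v = v} \<subseteq> \<sigma> ` {x\<in>{..<n}. \<sigma> x = \<tau> x}"
  proof
    fix v assume v: "v \<in> {v\<in>{..<n}. \<pi> v = v}"
    define x where "x = inv \<sigma> v"
    have "\<sigma> x = v" unfolding x_def using permutes_inverses[OF s] by simp
    moreover have "\<tau> x = v" using v unfolding x_def \<pi>_def by simp
    moreover have "x < n" using permutes_in_image[OF s, of x] v \<open>\<sigma> x = v\<close> by simp
    ultimately show "v \<in> \<sigma> ` {x\<in>{..<n}. \<sigma> x = \<tau> x}" by force
  qed
  have "Wt \<pi> {..<n} B = card {Z \<in> orbit \<pi> ` {..<n}. wc B Z}" using Wt_card by simp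
  also have "\<dots> \<le> card ((\<lambda>v. {v}) ` {v\<in>{..<n}. \<pi> v = v})" by (rule card_mono[OF _ sub]) simp
  also have "\<dots> \<le> card {v\<in>{..<n}. \<pi> v = v}" by (rule card_image_le) simp
  also have "\<dots> \<le> card (\<sigma> ` {x\<in>{..<n}. \<sigma> x = \<tau> x})" by (rule card_mono[OF _ sub2]) simp
  also have "\<dots> \<le> card {x\<in>{..<n}. \<sigma> x = \<tau> x}" by (rule card_image_le) simp
  finally show ?thesis unfolding \<pi>_def B_def .
qed

lemma iter_W:
  assumes s: "\<sigma> permutes {..<n}" and t: "\<tau> permutes {..<n}" and mn: "m \<le> n - 1"
  shows "j \<le> m \<Longrightarrow> contract_iter j n \<sigma> permutes {..<n-j} \<and> contract_iter j n \<tau> permutes {..<n-j} \<and>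
    Wt (contract_iter j n \<tau> \<circ> inv (contract_iter j n \<sigma>)) {..<n-j} {n-m..<n-j}
      \<le> Wt (\<tau> \<circ> inv \<sigma>) {..<n} {n-m..<n} + j"
proof (induction j)
  case 0 then show ?case using s t by simp
next
  case (Suc j)
  have X: "contract_iter j n \<sigma> permutes {..<n-j} \<and> contract_iter j n \<tau> permutes {..<n-j} \<and>
    Wt (contract_iter j n \<tau> \<circ> inv (contract_iter j n \<sigma>)) {..<n-j} {n-m..<n-j}
      \<le> Wt (\<tau> \<circ> inv \<sigma>) {..<n} {n-m..<n} + j" using Suc.IH Suc.prems by linarith
  note IH = conjunct1[OF X] conjunct1[OF conjunct2[OF X]] conjunct2[OF conjunct2[OF X]]
  have k: "0 < n - j" using Suc.prems mn by simp
  have yB: "n - j - 1 \<in> {n-m..<n-j}" using Suc.prems mn by auto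
  have e1: "n - j - 1 = n - Suc j" by simp
  have e2: "{n-m..<n-j} - {n - Suc j} = {n-m..<n - Suc j}" using Suc.prems mn by auto
  note st = step_W[OF IH(1) IH(2) k yB]
  have e3: "contract_iter (Suc j) n \<sigma> = contract (n - j) (contract_iter j n \<sigma>)"
    "contract_iter (Suc j) n \<tau> = contract (n - j) (contract_iter j n \<tau>)" by simp_all
  have A: "Wt (contract (n - j) (contract_iter j n \<tau>) \<circ> inv (contract (n - j) (contract_iter j n \<sigma>)))
      {..<n - Suc j} {n-m..<n - Suc j} \<le> Wt (\<tau> \<circ> inv \<sigma>) {..<n} {n-m..<n} + Suc j"
    using st IH(3) unfolding e1 e2 by linarith
  show ?case unfolding e3 using contract_permutes[OF IH(1) k] contract_permutes[OF IH(2) k] A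
    unfolding e1 by blast
qed

lemma pair_bound:
  assumes s: "\<sigma> permutes {..<n}" and t: "\<tau> permutes {..<n}" and mn: "m \<le> n - 1"
    and hyp: "\<forall>l. odd l \<and> 3 \<le> l \<and> l \<le> 2 * m + 1 \<longrightarrow> \<not> has_cycle_of_length n (\<tau> \<circ> inv \<sigma>) l"
  shows "int (hd_perm (n-m) (contract_iter m n \<sigma>) (contract_iter m n \<tau>)) \<ge> int (hd_perm n \<sigma> \<tau>) - 2 * int m"
proof -
  note it = iter_W[OF s t mn, of m]
  have "card {x\<in>{..<n-m}. contract_iter m n \<sigma> x = contract_iter m n \<tau> x}
      \<le> Wt (contract_iter m n \<tau> \<circ> inv (contract_iter m n \<sigma>)) {..<n-m} {}"
    using W_lower it by simp
  also have "\<dots> \<le> Wt (\<tau> \<circ> inv \<sigma>) {..<n} {n-m..<n} + m" using it by simp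
  also have "\<dots> \<le> card {x\<in>{..<n}. \<sigma> x = \<tau> x} + m" using W_upper[OF s t _ hyp] mn by simp
  finally have "card {x\<in>{..<n-m}. contract_iter m n \<sigma> x = contract_iter m n \<tau> x}
      \<le> card {x\<in>{..<n}. \<sigma> x = \<tau> x} + m" .
  then show ?thesis using hd_agree[of "n-m" "contract_iter m n \<sigma>" "contract_iter m n \<tau>"]
      hd_agree[of n \<sigma> \<tau>] mn by linarith
qed

theorem corollary5p3:
  fixes n m d :: nat and P :: "(nat \<Rightarrow> nat) set"
  assumes "perm_array n P"
    and "hd_array n P = d"
    and "1 \<le> m" and "m \<le> n - 1"
    and "\<forall>\<sigma>\<in>P. \<forall>\<tau>\<in>P. \<forall>l. odd l \<and> 3 \<le> l \<and> l \<le> 2 * m + 1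
              \<longrightarrow> \<not> has_cycle_of_length n (\<tau> \<circ> inv \<sigma>) l"
  shows "int (hd_array (n - m) (contract_array m n P)) \<ge> int d - 2 * int m
         \<and> (d > 2 * m \<longrightarrow> card (contract_array m n P) = card P)"
proof -
  have Pp: "\<And>\<sigma>. \<sigma> \<in> P \<Longrightarrow> \<sigma> permutes {..<n}" using assms(1) unfolding perm_array_def by auto
  define cm where "cm = contract_iter m n"
  have pb: "int (hd_perm (n-m) (cm \<sigma>) (cm \<tau>)) \<ge> int (hd_perm n \<sigma> \<tau>) - 2 * int m"
    if "\<sigma> \<in> P" "\<tau> \<in> P" for \<sigma> \<tau>
    unfolding cm_def using pair_bound[OF Pp[OF that(1)] Pp[OF that(2)] assms(4)] assms(5) that by blast
  define D where "D = {hd_perm n \<sigma> \<tau> | \<sigma> \<tau>. \<sigma> \<in> P \<and> \<tau> \<in> P \<and> \<sigma> \<noteq> \<tau>}"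
  have dD: "d = Inf D" using assms(2) unfolding hd_array_def D_def by simp
  have dle: "d \<le> hd_perm n \<sigma> \<tau>" if "\<sigma> \<in> P" "\<tau> \<in> P" "\<sigma> \<noteq> \<tau>" for \<sigma> \<tau>
    unfolding dD D_def by (rule wellorder_Inf_le1) (use that in blast)
  have hd0: "hd_perm k f f = 0" for k f unfolding hd_perm_def by simp
  have coll: "int d - 2 * int m \<le> 0" if "\<sigma> \<in> P" "\<tau> \<in> P" "\<sigma> \<noteq> \<tau>" "cm \<sigma> = cm \<tau>" for \<sigma> \<tau>
    using pb[OF that(1,2)] dle[OF that(1-3)] that(4) hd0 by simp
  define D' where "D' = {hd_perm (n-m) \<sigma> \<tau> | \<sigma> \<tau>. \<sigma> \<in> cm ` P \<and> \<tau> \<in> cm ` P \<and> \<sigma> \<noteq> \<tau>}"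
  have hd': "hd_array (n - m) (contract_array m n P) = Inf D'"
    unfolding hd_array_def D'_def contract_array_def cm_def by simp
  have part1: "int (hd_array (n - m) (contract_array m n P)) \<ge> int d - 2 * int m"
  proof (cases "D' = {}")
    case True
    show ?thesis
    proof (cases "D = {}")
      case True
      then have "D = D'" using \<open>D' = {}\<close> by simp
      then show ?thesis using hd' dD by simp
    next
      case False
      then obtain \<sigma> \<tau> where st: "\<sigma> \<in> P" "\<tau> \<in> P" "\<sigma> \<noteq> \<tau>" unfolding D_def by auto
      have "cm \<sigma> = cm \<tau>" using \<open>D' = {}\<close> st unfolding D'_def by blast
      then show ?thesis using coll[OF st] by simp
    qed
  next
    case False
    have "Inf D' \<in> D'" using Inf_nat_def1[OF False] .
    then obtain \<sigma> \<tau> where st: "\<sigma> \<in> P" "\<tau> \<in> P" "cm \<sigma> \<noteq> cm \<tau>"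
      "Inf D' = hd_perm (n-m) (cm \<sigma>) (cm \<tau>)" unfolding D'_def by blast
    then have "\<sigma> \<noteq> \<tau>" by blast
    then show ?thesis using pb[OF st(1,2)] dle[OF st(1,2)] st(4) hd' by simp
  qed
  have part2: "card (contract_array m n P) = card P" if "d > 2 * m"
  proof -
    have "inj_on cm P"
    proof (rule inj_onI, rule ccontr)
      fix \<sigma> \<tau> assume "\<sigma> \<in> P" "\<tau> \<in> P" "cm \<sigma> = cm \<tau>" "\<sigma> \<noteq> \<tau>"
      then show False using coll that by force
    qed
    then show ?thesis unfolding contract_array_def cm_def[symmetric] by (rule card_image)
  qed
  show ?thesis using part1 part2 by blast
qed

end
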